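(* Let $X=\Sigma_P$ be a one-sided subshift with shift $\theta$ on an at most countable alphabet $S$ with transition matrix $P$, and let $\mu$ be a $\theta$-invariant probability measure for which there are a function $p:X\to\mathbb{R}$ and a non-decreasing sequence $K_n>0$ with $\log(K_n)/n\to0$ such that $K_{|w|}^{-1}\le e^{S_wp}/\mu([w])\le K_{|w|}$ for all $w\in\Sigma_P^*$. Let $A\subset X$ be a hole which is a union of $m$-cylinders for some $m\in\mathbb{N}$. Then the reciprocal escape rate $\varphi\mapsto\rho(A,\varphi)^{-1}$ is sublinear on ceiling functions that are bounded and bounded away from zero: for such $\varphi_1,\varphi_2$ and $\lambda>0$ for which $\rho(A,\varphi_1),\rho(A,\varphi_2),\rho(A,\varphi_1+\varphi_2)$ exist and lie in $(0,\infty)$, \[\rho(A,\lambda\varphi_1)^{-1}=\lambda\,\rho(A,\varphi_1)^{-1},\qquad \rho(A,\varphi_1+\varphi_2)^{-1}\le\rho(A,\varphi_1)^{-1}+\rho(A,\varphi_2)^{-1}.\]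
   Context: $\Sigma_P=\{x\in S^{\mathbb{N}}:p_{x_i,x_{i+1}}\ne0\ \forall i\}$; $\Sigma_P^*$ the finite admissible words; $[w]$ the cylinder of $w$, $|w|$ its length; $m$-cylinders are $[w]$ with $|w|=m$. $S_wp=\sup_{x\in[w]}\sum_{k=0}^{|w|-1}p\circ\theta^k(x)$. A ceiling function is a positive measurable $\varphi$ with $\inf\varphi>0$. With $S_n\varphi=\sum_{k<n}\varphi\circ\theta^k$ and $N_t^\varphi(x)=\min\{n\in\mathbb{N}_0:S_n\varphi(x)>t\}$, the special flow is $\overline{X}_\varphi=\{(x,s):0\le s<\varphi(x)\}$ with $\overline{\mu}_\varphi$ the restriction of $\mu\otimes$Lebesgue and $\Phi^\varphi_t(x,s)=(x,s+t)$ if $t<\varphi(x)-s$, else $(\theta^{N-1}x,s+t-S_{N-1}\varphi(x))$, $N=N^\varphi_{s+t}(x)$. A hole is a measurable $A\subset X$ with $\bigcup_{n\ge0}\theta^{-n}A=X$ a.e.; $\rho(A,\varphi)=\lim_{t\to\infty}-\frac1t\log\overline{\mu}_\varphi(\{(x,s):\forall\tau\in[0,t]:\Phi^\varphi_\tau(x,s)\notin A\times\mathbb{R}\})$ when the limit exists. *)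

theory Defs
  imports "HOL-Probability.Probability"
begin

definition sigmaP :: "('a \<Rightarrow> 'a \<Rightarrow> real) \<Rightarrow> (nat \<Rightarrow> 'a) set" where
  "sigmaP P = {x. \<forall>i. P (x i) (x (Suc i)) \<noteq> 0}"

definition shift :: "(nat \<Rightarrow> 'a) \<Rightarrow> (nat \<Rightarrow> 'a)" where
  "shift x = (\<lambda>i. x (Suc i))"

definition admissible :: "('a \<Rightarrow> 'a \<Rightarrow> real) \<Rightarrow> 'a list \<Rightarrow> bool" where
  "admissible P w \<longleftrightarrow> (\<forall>i. Suc i < length w \<longrightarrow> P (w ! i) (w ! Suc i) \<noteq> 0)"

definition cyl :: "('a \<Rightarrow> 'a \<Rightarrow> real) \<Rightarrow> 'a list \<Rightarrow> (nat \<Rightarrow> 'a) set" where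
  "cyl P w = {x \<in> sigmaP P. \<forall>i < length w. x i = w ! i}"

definition Sw :: "('a \<Rightarrow> 'a \<Rightarrow> real) \<Rightarrow> ((nat \<Rightarrow> 'a) \<Rightarrow> real) \<Rightarrow> 'a list \<Rightarrow> ereal" where
  "Sw P p w = (SUP x \<in> cyl P w. ereal (\<Sum>k < length w. p ((shift ^^ k) x)))"

definition birkhoff :: "((nat \<Rightarrow> 'a) \<Rightarrow> real) \<Rightarrow> nat \<Rightarrow> (nat \<Rightarrow> 'a) \<Rightarrow> real" where
  "birkhoff \<phi> n x = (\<Sum>k < n. \<phi> ((shift ^^ k) x))"

definition Nt :: "((nat \<Rightarrow> 'a) \<Rightarrow> real) \<Rightarrow> real \<Rightarrow> (nat \<Rightarrow> 'a) \<Rightarrow> nat" where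
  "Nt \<phi> t x = (LEAST n. birkhoff \<phi> n x > t)"

definition sflow :: "((nat \<Rightarrow> 'a) \<Rightarrow> real) \<Rightarrow> real \<Rightarrow> (nat \<Rightarrow> 'a) \<times> real \<Rightarrow> (nat \<Rightarrow> 'a) \<times> real" where
  "sflow \<phi> t xs = (let x = fst xs; s = snd xs in
     if t < \<phi> x - s then (x, s + t)
     else (let N = Nt \<phi> (s + t) x in ((shift ^^ (N - 1)) x, s + t - birkhoff \<phi> (N - 1) x)))"

definition barX :: "('a \<Rightarrow> 'a \<Rightarrow> real) \<Rightarrow> ((nat \<Rightarrow> 'a) \<Rightarrow> real) \<Rightarrow> ((nat \<Rightarrow> 'a) \<times> real) set" where
  "barX P \<phi> = {(x, s). x \<in> sigmaP P \<and> 0 \<le> s \<and> s < \<phi> x}"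

definition survivors :: "('a \<Rightarrow> 'a \<Rightarrow> real) \<Rightarrow> (nat \<Rightarrow> 'a) set \<Rightarrow> ((nat \<Rightarrow> 'a) \<Rightarrow> real) \<Rightarrow> real
    \<Rightarrow> ((nat \<Rightarrow> 'a) \<times> real) set" where
  "survivors P A \<phi> t = {xs \<in> barX P \<phi>. \<forall>\<tau> \<in> {0..t}. fst (sflow \<phi> \<tau> xs) \<notin> A}"

text \<open>\<mu>-bar_\<phi> is the restriction of \<mu> \<otimes> Lebesgue to barX; survivors are contained in barX.\<close>
definition has_escape_rate :: "('a \<Rightarrow> 'a \<Rightarrow> real) \<Rightarrow> (nat \<Rightarrow> 'a) measure \<Rightarrow> (nat \<Rightarrow> 'a) set
    \<Rightarrow> ((nat \<Rightarrow> 'a) \<Rightarrow> real) \<Rightarrow> real \<Rightarrow> bool" where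
  "has_escape_rate P \<mu> A \<phi> r \<longleftrightarrow>
     ((\<lambda>t. - ln (measure (\<mu> \<Otimes>\<^sub>M lborel) (survivors P A \<phi> t)) / t) \<longlongrightarrow> r) at_top"

definition is_hole :: "(nat \<Rightarrow> 'a) measure \<Rightarrow> (nat \<Rightarrow> 'a) set \<Rightarrow> bool" where
  "is_hole \<mu> A \<longleftrightarrow> A \<in> sets \<mu> \<and> (AE x in \<mu>. x \<in> (\<Union>n. (shift ^^ n) -` A))"

definition bdd_ceiling :: "('a \<Rightarrow> 'a \<Rightarrow> real) \<Rightarrow> (nat \<Rightarrow> 'a) measure \<Rightarrow> ((nat \<Rightarrow> 'a) \<Rightarrow> real) \<Rightarrow> bool" where
  "bdd_ceiling P \<mu> \<phi> \<longleftrightarrow> \<phi> \<in> borel_measurable \<mu> \<and>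
     (\<exists>c C. 0 < c \<and> (\<forall>x \<in> sigmaP P. c \<le> \<phi> x \<and> \<phi> x \<le> C))"

end

theory Submission
  imports Defs
begin

lemma shift_pow: "(shift ^^ k) x = (\<lambda>i. x (i + k))"
  by (induction k arbitrary: x) (auto simp: shift_def)

lemma sigmaP_shift_pow: "x \<in> sigmaP P \<Longrightarrow> (shift ^^ k) x \<in> sigmaP P"
  by (auto simp: sigmaP_def shift_pow)

lemma birkhoff_0[simp]: "birkhoff \<phi> 0 x = 0" by (simp add: birkhoff_def)
lemma birkhoff_Suc: "birkhoff \<phi> (Suc k) x = birkhoff \<phi> k x + \<phi> ((shift ^^ k) x)"
  by (simp add: birkhoff_def)

lemma birkhoff_strict:
  assumes pos: "\<forall>y\<in>sigmaP P. 0 < \<phi> y" and x: "x \<in> sigmaP P" and jk: "j < k"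
  shows "birkhoff \<phi> j x < birkhoff \<phi> k x"
  using jk
proof (induction k)
  case 0 then show ?case by simp
next
  case (Suc k)
  have "0 < \<phi> ((shift ^^ k) x)" using pos sigmaP_shift_pow[OF x] by blast
  then show ?case using Suc by (cases "j = k") (auto simp: birkhoff_Suc)
qed

lemma birkhoff_mono:
  assumes pos: "\<forall>y\<in>sigmaP P. 0 < \<phi> y" and x: "x \<in> sigmaP P" and jk: "j \<le> k"
  shows "birkhoff \<phi> j x \<le> birkhoff \<phi> k x"
  using birkhoff_strict[OF pos x, of j k] jk by (cases "j = k") auto

lemma birkhoff_lower:
  assumes c: "\<forall>y\<in>sigmaP P. c \<le> \<phi> y" and x: "x \<in> sigmaP P"
  shows "real n * c \<le> birkhoff \<phi> n x"
proof (induction n)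
  case 0 then show ?case by simp
next
  case (Suc n)
  have "c \<le> \<phi> ((shift ^^ n) x)" using c sigmaP_shift_pow[OF x] by blast
  then show ?case using Suc by (simp add: birkhoff_Suc algebra_simps)
qed

lemma Nt_birkhoff:
  assumes pos: "\<forall>y\<in>sigmaP P. 0 < \<phi> y" and x: "x \<in> sigmaP P"
  shows "Nt \<phi> (birkhoff \<phi> k x) x = Suc k"
  unfolding Nt_def
proof (rule Least_equality)
  show "birkhoff \<phi> k x < birkhoff \<phi> (Suc k) x" using birkhoff_strict[OF pos x] by simp
  fix n assume "birkhoff \<phi> k x < birkhoff \<phi> n x"
  then show "Suc k \<le> n" using birkhoff_mono[OF pos x, of n k] by (cases "n \<le> k") auto
qed

definition Gs :: "('a \<Rightarrow> 'a \<Rightarrow> real) \<Rightarrow> (nat \<Rightarrow> 'a) set \<Rightarrow> ((nat \<Rightarrow> 'a) \<Rightarrow> real) \<Rightarrow> real \<Rightarrow> (nat \<Rightarrow> 'a) set" where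
  "Gs P A \<phi> t = {x \<in> sigmaP P. \<forall>k. birkhoff \<phi> k x \<le> t \<longrightarrow> (shift ^^ k) x \<notin> A}"

lemma Gs_anti: "t \<le> t' \<Longrightarrow> Gs P A \<phi> t' \<subseteq> Gs P A \<phi> t"
  by (auto simp: Gs_def)

lemma surv_char:
  assumes c: "\<forall>y\<in>sigmaP P. c \<le> \<phi> y" and cpos: "c > 0" and t: "t \<ge> 0"
  shows "survivors P A \<phi> t = {(x, s). 0 \<le> s \<and> s < \<phi> x \<and> x \<in> Gs P A \<phi> (s + t)}"
proof -
  have pos: "\<forall>y\<in>sigmaP P. 0 < \<phi> y" using c cpos by force
  show ?thesis
  proof (intro set_eqI iffI)
    fix xs assume xs: "xs \<in> survivors P A \<phi> t"
    obtain x s where xs_eq: "xs = (x, s)" by force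
    have x: "x \<in> sigmaP P" and s0: "0 \<le> s" and sx: "s < \<phi> x"
      and H: "\<And>\<tau>. \<tau> \<in> {0..t} \<Longrightarrow> fst (sflow \<phi> \<tau> (x, s)) \<notin> A"
      using xs by (auto simp: survivors_def barX_def xs_eq)
    have "(shift ^^ k) x \<notin> A" if k: "birkhoff \<phi> k x \<le> s + t" for k
    proof (cases k)
      case 0
      have "fst (sflow \<phi> 0 (x, s)) = x" using sx by (simp add: sflow_def)
      then show ?thesis using H[of 0] t 0 by auto
    next
      case (Suc j)
      have b1: "\<phi> x \<le> birkhoff \<phi> k x"
        using birkhoff_mono[OF pos x, of 1 k] Suc by (simp add: birkhoff_def)
      define \<tau> where "\<tau> = birkhoff \<phi> k x - s"
      have "\<tau> \<in> {0..t}" using b1 sx k by (auto simp: \<tau>_def)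
      moreover have "fst (sflow \<phi> \<tau> (x, s)) = (shift ^^ k) x"
        using b1 Nt_birkhoff[OF pos x, of k] by (simp add: sflow_def \<tau>_def Let_def)
      ultimately show ?thesis using H by metis
    qed
    then show "xs \<in> {(x, s). 0 \<le> s \<and> s < \<phi> x \<and> x \<in> Gs P A \<phi> (s + t)}"
      using x s0 sx by (auto simp: xs_eq Gs_def)
  next
    fix xs assume xs: "xs \<in> {(x, s). 0 \<le> s \<and> s < \<phi> x \<and> x \<in> Gs P A \<phi> (s + t)}"
    obtain x s where xs_eq: "xs = (x, s)" by force
    have x: "x \<in> sigmaP P" and s0: "0 \<le> s" and sx: "s < \<phi> x"
      and G: "\<And>k. birkhoff \<phi> k x \<le> s + t \<Longrightarrow> (shift ^^ k) x \<notin> A"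
      using xs by (auto simp: xs_eq Gs_def)
    have "fst (sflow \<phi> \<tau> (x, s)) \<notin> A" if \<tau>: "\<tau> \<in> {0..t}" for \<tau>
    proof (cases "\<tau> < \<phi> x - s")
      case True
      then show ?thesis using G[of 0] s0 t by (simp add: sflow_def)
    next
      case False
      define N where "N = Nt \<phi> (s + \<tau>) x"
      obtain n :: nat where n: "(s + \<tau>) / c < real n" using reals_Archimedean2 by blast
      have "s + \<tau> < real n * c" using n cpos by (simp add: field_simps)
      also have "\<dots> \<le> birkhoff \<phi> n x" by (rule birkhoff_lower[OF c x])
      finally have ex: "s + \<tau> < birkhoff \<phi> n x" .
      have N1: "s + \<tau> < birkhoff \<phi> N x" unfolding N_def Nt_def by (rule LeastI[of _ n]) (rule ex)
      have "N \<noteq> 0"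
      proof
        assume "N = 0"
        then have "s + \<tau> < 0" using N1 by simp
        then show False using s0 \<tau> by simp
      qed
      then have "N - 1 < N" by simp
      then have "\<not> (s + \<tau> < birkhoff \<phi> (N - 1) x)"
        unfolding N_def Nt_def by (rule not_less_Least)
      then have "birkhoff \<phi> (N - 1) x \<le> s + t" using \<tau> by auto
      then have "(shift ^^ (N - 1)) x \<notin> A" by (rule G)
      then show ?thesis using False by (simp add: sflow_def Let_def N_def)
    qed
    then show "xs \<in> survivors P A \<phi> t"
      using x s0 sx by (auto simp: xs_eq survivors_def barX_def)
  qed
qed


lemma shift_pow_meas:
  assumes "shift \<in> M \<rightarrow>\<^sub>M M" shows "(shift ^^ k) \<in> M \<rightarrow>\<^sub>M M"
  by (induction k) (auto intro: measurable_compose[OF assms] simp del: funpow.simps simp: funpow_Suc_right)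

lemma birkhoff_meas:
  assumes "shift \<in> M \<rightarrow>\<^sub>M M" "\<phi> \<in> borel_measurable M"
  shows "birkhoff \<phi> k \<in> borel_measurable M"
  unfolding birkhoff_def
  by (intro borel_measurable_sum measurable_compose[OF shift_pow_meas[OF assms(1)] assms(2)])

lemma Gs_meas:
  assumes sp: "space M = UNIV" and sh: "shift \<in> M \<rightarrow>\<^sub>M M" and ph: "\<phi> \<in> borel_measurable M"
    and A: "A \<in> sets M" and S: "sigmaP P \<in> sets M"
  shows "Gs P A \<phi> t \<in> sets M"
proof -
  have "Gs P A \<phi> t = sigmaP P \<inter> (\<Inter>k. {x \<in> space M. birkhoff \<phi> k x \<le> t \<longrightarrow> (shift ^^ k) x \<notin> A})"
    by (auto simp: Gs_def sp)
  also have "\<dots> \<in> sets M"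
  proof -
    have "{x \<in> space M. birkhoff \<phi> k x \<le> t \<longrightarrow> (shift ^^ k) x \<notin> A} \<in> sets M" for k
    proof -
    have [measurable]: "birkhoff \<phi> k \<in> borel_measurable M" using birkhoff_meas[OF sh ph] .
    have [measurable]: "(shift ^^ k) \<in> M \<rightarrow>\<^sub>M M" using shift_pow_meas[OF sh] .
    have e: "{x \<in> space M. birkhoff \<phi> k x \<le> t \<longrightarrow> (shift ^^ k) x \<notin> A} =
      (space M - {x \<in> space M. birkhoff \<phi> k x \<le> t}) \<union> (space M - ((shift ^^ k) -` A \<inter> space M))"
      by auto
    have "birkhoff \<phi> k -` {..t} \<inter> space M \<in> sets M"
      by (rule measurable_sets[OF birkhoff_meas[OF sh ph]]) auto
    moreover have "birkhoff \<phi> k -` {..t} \<inter> space M = {x \<in> space M. birkhoff \<phi> k x \<le> t}" by auto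
    ultimately have m1: "{x \<in> space M. birkhoff \<phi> k x \<le> t} \<in> sets M" by simp
    have m2: "(shift ^^ k) -` A \<inter> space M \<in> sets M"
      using measurable_sets[OF shift_pow_meas[OF sh] A] .
    show "{x \<in> space M. birkhoff \<phi> k x \<le> t \<longrightarrow> (shift ^^ k) x \<notin> A} \<in> sets M"
      unfolding e using m1 m2 by auto
    qed
    then show ?thesis
      by (intro sets.Int S sets.countable_INT'') (auto simp: sp[symmetric])
  qed
  finally show ?thesis .
qed

lemma surv_meas:
  assumes sp: "space M = UNIV" and sh: "shift \<in> M \<rightarrow>\<^sub>M M" and ph: "\<phi> \<in> borel_measurable M"
    and A: "A \<in> sets M" and S: "sigmaP P \<in> sets M"
  shows "{(x, s). 0 \<le> s \<and> s < \<phi> x \<and> x \<in> Gs P A \<phi> (s + t)} \<in> sets (M \<Otimes>\<^sub>M lborel)"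
proof -
  have [measurable]: "birkhoff \<phi> k \<in> borel_measurable M" for k using birkhoff_meas[OF sh ph] .
  have [measurable]: "(shift ^^ k) \<in> M \<rightarrow>\<^sub>M M" for k using shift_pow_meas[OF sh] .
  have [measurable]: "A \<in> sets M" "sigmaP P \<in> sets M" "\<phi> \<in> borel_measurable M" using A S ph by auto
  have "{(x, s). 0 \<le> s \<and> s < \<phi> x \<and> x \<in> Gs P A \<phi> (s + t)} =
     {xs \<in> space (M \<Otimes>\<^sub>M lborel). 0 \<le> snd xs \<and> snd xs < \<phi> (fst xs) \<and> fst xs \<in> sigmaP P \<and>
        (\<forall>k. birkhoff \<phi> k (fst xs) \<le> snd xs + t \<longrightarrow> (shift ^^ k) (fst xs) \<notin> A)}"
    by (auto simp: Gs_def space_pair_measure sp)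
  also have "\<dots> \<in> sets (M \<Otimes>\<^sub>M lborel)" by measurable
  finally show ?thesis .
qed


lemma measure_times:
  assumes "finite_measure M" "G \<in> sets M" "B \<in> sets borel" "emeasure lborel B < \<infinity>"
  shows "measure (M \<Otimes>\<^sub>M lborel) (G \<times> B) = measure M G * measure lborel B"
proof -
  have "emeasure (M \<Otimes>\<^sub>M lborel) (G \<times> B) = emeasure M G * emeasure lborel B"
    using assms by (intro lborel.emeasure_pair_measure_Times) auto
  then show ?thesis
    by (simp add: measure_def enn2real_mult)
qed

lemma rect_fmeas:
  assumes "finite_measure M" "G \<in> sets M" "B \<in> sets borel" "emeasure lborel B < \<infinity>"
  shows "G \<times> B \<in> fmeasurable (M \<Otimes>\<^sub>M lborel)"
proof -
  have "emeasure (M \<Otimes>\<^sub>M lborel) (G \<times> B) = emeasure M G * emeasure lborel B"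
    using assms by (intro lborel.emeasure_pair_measure_Times) auto
  also have "\<dots> < \<infinity>" using assms finite_measure.emeasure_finite[OF assms(1)]
    by (simp add: ennreal_mult_less_top top.not_eq_extremum)
  finally show ?thesis using assms by (intro fmeasurableI) auto
qed

lemma surv_bounds:
  assumes fin: "finite_measure M" and sp: "space M = UNIV" and sh: "shift \<in> M \<rightarrow>\<^sub>M M"
    and ph: "\<phi> \<in> borel_measurable M"
    and A: "A \<in> sets M" and S: "sigmaP P \<in> sets M"
    and cC: "\<forall>y\<in>sigmaP P. c \<le> \<phi> y \<and> \<phi> y \<le> C" and cpos: "c > 0" and Cc: "c \<le> C" and t: "t \<ge> 0"
  shows "measure (M \<Otimes>\<^sub>M lborel) (survivors P A \<phi> t) \<le> measure M (Gs P A \<phi> t) * C"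
    and "measure M (Gs P A \<phi> (t + c)) * c \<le> measure (M \<Otimes>\<^sub>M lborel) (survivors P A \<phi> t)"
proof -
  have c: "\<forall>y\<in>sigmaP P. c \<le> \<phi> y" using cC by auto
  have eq: "survivors P A \<phi> t = {(x, s). 0 \<le> s \<and> s < \<phi> x \<and> x \<in> Gs P A \<phi> (s + t)}"
    by (rule surv_char[OF c cpos t])
  have sm: "survivors P A \<phi> t \<in> sets (M \<Otimes>\<^sub>M lborel)"
    unfolding eq by (rule surv_meas[OF sp sh ph A S])
  have Gm: "Gs P A \<phi> u \<in> sets M" for u by (rule Gs_meas[OF sp sh ph A S])
  have sub1: "survivors P A \<phi> t \<subseteq> Gs P A \<phi> t \<times> {0..C}"
    unfolding eq using Gs_anti[of t] cC by (fastforce simp: Gs_def)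
  have f1: "Gs P A \<phi> t \<times> {0..C} \<in> fmeasurable (M \<Otimes>\<^sub>M lborel)"
    by (rule rect_fmeas[OF fin Gm]) (auto simp: emeasure_lborel_Icc_eq)
  have "measure (M \<Otimes>\<^sub>M lborel) (survivors P A \<phi> t) \<le> measure (M \<Otimes>\<^sub>M lborel) (Gs P A \<phi> t \<times> {0..C})"
    by (rule measure_mono_fmeasurable[OF sub1 sm f1])
  also have "\<dots> = measure M (Gs P A \<phi> t) * C"
    using Cc cpos by (subst measure_times[OF fin Gm]) auto
  finally show "measure (M \<Otimes>\<^sub>M lborel) (survivors P A \<phi> t) \<le> measure M (Gs P A \<phi> t) * C" .
  have f2: "survivors P A \<phi> t \<in> fmeasurable (M \<Otimes>\<^sub>M lborel)"
    by (rule fmeasurableI2[OF f1 sub1 sm])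
  have sub2: "Gs P A \<phi> (t + c) \<times> {0..<c} \<subseteq> survivors P A \<phi> t"
  proof
    fix xs assume xs: "xs \<in> Gs P A \<phi> (t + c) \<times> {0..<c}"
    then obtain x s where xs_eq: "xs = (x, s)" and x: "x \<in> Gs P A \<phi> (t + c)" and s: "0 \<le> s" "s < c"
      by auto
    have "x \<in> sigmaP P" using x by (simp add: Gs_def)
    then have "s < \<phi> x" using s c by force
    moreover have "x \<in> Gs P A \<phi> (s + t)" using Gs_anti[of "s + t" "t + c"] s x by auto
    ultimately show "xs \<in> survivors P A \<phi> t" unfolding eq using s xs_eq by auto
  qed
  have "measure M (Gs P A \<phi> (t + c)) * c = measure (M \<Otimes>\<^sub>M lborel) (Gs P A \<phi> (t + c) \<times> {0..<c})"
    using cpos by (subst measure_times[OF fin Gm]) auto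
  also have "\<dots> \<le> measure (M \<Otimes>\<^sub>M lborel) (survivors P A \<phi> t)"
    by (rule measure_mono_fmeasurable[OF sub2 fmeasurableD[OF rect_fmeas[OF fin Gm]] f2]) (use cpos in auto)
  finally show "measure M (Gs P A \<phi> (t + c)) * c \<le> measure (M \<Otimes>\<^sub>M lborel) (survivors P A \<phi> t)" .
qed


lemma inv_t_lim: "((\<lambda>t::real. k / t) \<longlongrightarrow> 0) at_top"
  by (intro tendsto_divide_0[OF tendsto_const] filterlim_at_top_imp_at_infinity filterlim_ident)

lemma lin_filterlim:
  assumes lam: "(lam::real) > 0" shows "filterlim (\<lambda>t. t / lam + d) at_top at_top"
proof -
  have "LIM t at_top. t * inverse lam :> at_top"
    by (rule filterlim_at_top_mult_tendsto_pos[OF tendsto_const _ filterlim_ident]) (use lam in simp)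
  then have "LIM t at_top. d + t * inverse lam :> at_top"
    by (rule filterlim_tendsto_add_at_top[OF tendsto_const])
  then show ?thesis by (simp add: divide_inverse add.commute)
qed

lemma rate_upper:
  fixes f :: "real \<Rightarrow> real"
  assumes nn: "\<And>t. f t \<ge> 0" and lim: "((\<lambda>t. - ln (f t) / t) \<longlongrightarrow> r) at_top"
    and r': "0 < r'" "r' < r"
  shows "eventually (\<lambda>u. 0 < f u \<and> f u \<le> exp (- r' * u)) at_top"
proof -
  have "eventually (\<lambda>u. r' < - ln (f u) / u) at_top" using order_tendstoD(1)[OF lim r'(2)] .
  moreover have "eventually (\<lambda>u::real. 0 < u) at_top" by (rule eventually_gt_at_top)
  ultimately show ?thesis
  proof eventually_elim
    case (elim u)
    have fpos: "0 < f u"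
    proof (rule ccontr)
      assume "\<not> 0 < f u" then have "f u = 0" using nn[of u] by auto
      then show False using elim r' by simp
    qed
    have "r' * u < - ln (f u)" using elim by (simp add: field_simps)
    then have "ln (f u) < - r' * u" by simp
    then have "f u < exp (- r' * u)" using fpos by (metis exp_ln exp_less_cancel_iff)
    then show ?case using fpos by simp
  qed
qed

lemma rate_lower:
  fixes f :: "real \<Rightarrow> real"
  assumes nn: "\<And>t. f t \<ge> 0" and lim: "((\<lambda>t. - ln (f t) / t) \<longlongrightarrow> r) at_top"
    and r: "0 < r" and D: "D > 0"
    and ev: "eventually (\<lambda>t. f t \<le> D * exp (- \<gamma> * t)) at_top"
  shows "\<gamma> \<le> r"
proof -
  have lim2: "((\<lambda>t. \<gamma> - ln D / t) \<longlongrightarrow> \<gamma> - 0) at_top"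
    by (intro tendsto_diff tendsto_const inv_t_lim)
  have ev0: "eventually (\<lambda>u. 0 < f u \<and> f u \<le> exp (- (r/2) * u)) at_top"
    using r by (intro rate_upper[OF nn lim]) auto
  have ev2: "eventually (\<lambda>t. \<gamma> - ln D / t \<le> - ln (f t) / t) at_top"
    using ev ev0 eventually_gt_at_top[of "0::real"]
  proof eventually_elim
    case (elim t)
    have "ln (f t) \<le> ln (D * exp (- \<gamma> * t))" using elim D by simp
    also have "\<dots> = ln D - \<gamma> * t" using D by (simp add: ln_mult)
    finally have "\<gamma> * t - ln D \<le> - ln (f t)" by simp
    then have "(\<gamma> * t - ln D) / t \<le> - ln (f t) / t" using elim by (intro divide_right_mono) auto
    then show ?case using elim by (simp add: field_simps)
  qed
  show ?thesis using tendsto_le[OF trivial_limit_at_top_linorder lim lim2 ev2] by simp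
qed

lemma rate_sandwich:
  fixes f h :: "real \<Rightarrow> real"
  assumes nnf: "\<And>t. f t \<ge> 0" and lim: "((\<lambda>t. - ln (f t) / t) \<longlongrightarrow> r) at_top"
    and r: "0 < r" and lam: "lam > 0" and k1: "k1 > 0" and k2: "k2 > 0"
    and up: "eventually (\<lambda>t. h t \<le> k1 * f (t / lam - d1)) at_top"
    and lo: "eventually (\<lambda>t. k2 * f (t / lam + d2) \<le> h t) at_top"
  shows "((\<lambda>t. - ln (h t) / t) \<longlongrightarrow> r / lam) at_top"
proof -
  define F where "F u = - ln (f u) / u" for u
  have u1: "filterlim (\<lambda>t. t / lam - d1) at_top at_top"
    using lin_filterlim[OF lam, of "- d1"] by simp
  have u2: "filterlim (\<lambda>t. t / lam + d2) at_top at_top"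
    using lin_filterlim[OF lam, of d2] .
  have ev0: "eventually (\<lambda>u. 0 < f u \<and> f u \<le> exp (- (r/2) * u)) at_top"
    using r by (intro rate_upper[OF nnf lim]) auto
  have q: "((\<lambda>t. (t / lam + d) / t) \<longlongrightarrow> 1 / lam) at_top" for d
  proof -
    have "((\<lambda>t. 1 / lam + d / t) \<longlongrightarrow> 1 / lam + 0) at_top"
      by (intro tendsto_add tendsto_const inv_t_lim)
    moreover have "eventually (\<lambda>t. 1 / lam + d / t = (t / lam + d) / t) at_top"
      using eventually_gt_at_top[of 0] by eventually_elim (use lam in \<open>simp add: field_simps\<close>)
    ultimately show ?thesis by (simp add: tendsto_cong)
  qed
  have L1: "((\<lambda>t. - ln k1 / t + F (t / lam - d1) * ((t / lam + (- d1)) / t)) \<longlongrightarrow> 0 + r * (1 / lam)) at_top"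
    by (intro tendsto_add inv_t_lim tendsto_mult q filterlim_compose[OF _ u1]) (use lim F_def in auto)
  have L2: "((\<lambda>t. - ln k2 / t + F (t / lam + d2) * ((t / lam + d2) / t)) \<longlongrightarrow> 0 + r * (1 / lam)) at_top"
    by (intro tendsto_add inv_t_lim tendsto_mult q filterlim_compose[OF _ u2]) (use lim F_def in auto)
  have pf1: "eventually (\<lambda>t. 0 < f (t / lam - d1)) at_top"
    using eventually_compose_filterlim[OF ev0 u1] by (auto elim: eventually_mono)
  have pu1: "eventually (\<lambda>t. 0 < t / lam - d1) at_top"
    using eventually_compose_filterlim[OF eventually_gt_at_top[of "0::real"] u1] .
  have pu2: "eventually (\<lambda>t. 0 < t / lam + d2) at_top"
    using eventually_compose_filterlim[OF eventually_gt_at_top[of "0::real"] u2] .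
  have pf2: "eventually (\<lambda>t. 0 < f (t / lam + d2)) at_top"
    using eventually_compose_filterlim[OF ev0 u2] by (auto elim: eventually_mono)
  have E1: "eventually (\<lambda>t. - ln k1 / t + F (t / lam - d1) * ((t / lam + (- d1)) / t) \<le> - ln (h t) / t) at_top"
    using up lo pf1 pf2 pu1 pu2 eventually_gt_at_top[of "0::real"]
  proof eventually_elim
    case (elim t)
    have hpos: "0 < h t" using elim k2 by (meson mult_pos_pos order_less_le_trans)
    have "ln (h t) \<le> ln (k1 * f (t / lam - d1))" using elim hpos by simp
    also have "\<dots> = ln k1 + ln (f (t / lam - d1))" using k1 elim by (simp add: ln_mult)
    finally have "- ln k1 - ln (f (t / lam - d1)) \<le> - ln (h t)" by simp
    then have "(- ln k1 - ln (f (t / lam - d1))) / t \<le> - ln (h t) / t" using elim by (intro divide_right_mono) auto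
    moreover have "(- ln k1 - ln (f (t / lam - d1))) / t = - ln k1 / t + F (t / lam - d1) * ((t / lam + (- d1)) / t)"
    proof -
      have "F (t / lam - d1) * ((t / lam - d1) / t) = - ln (f (t / lam - d1)) / t"
        using elim unfolding F_def by (simp add: divide_simps)
      then show ?thesis by (simp add: diff_divide_distrib)
    qed
    ultimately show ?case by simp
  qed
  have E2: "eventually (\<lambda>t. - ln (h t) / t \<le> - ln k2 / t + F (t / lam + d2) * ((t / lam + d2) / t)) at_top"
    using up lo pf1 pf2 pu1 pu2 eventually_gt_at_top[of "0::real"]
  proof eventually_elim
    case (elim t)
    have "0 < k2 * f (t / lam + d2)" using elim k2 by simp
    then have "ln (k2 * f (t / lam + d2)) \<le> ln (h t)" using elim by (subst ln_le_cancel_iff) auto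
    moreover have "ln (k2 * f (t / lam + d2)) = ln k2 + ln (f (t / lam + d2))" using k2 elim by (simp add: ln_mult)
    ultimately have "- ln (h t) \<le> - ln k2 - ln (f (t / lam + d2))" by simp
    then have "- ln (h t) / t \<le> (- ln k2 - ln (f (t / lam + d2))) / t" using elim by (intro divide_right_mono) auto
    moreover have "(- ln k2 - ln (f (t / lam + d2))) / t = - ln k2 / t + F (t / lam + d2) * ((t / lam + d2) / t)"
    proof -
      have "F (t / lam + d2) * ((t / lam + d2) / t) = - ln (f (t / lam + d2)) / t"
        using elim unfolding F_def by (simp add: divide_simps)
      then show ?thesis by (simp add: diff_divide_distrib)
    qed
    ultimately show ?case by simp
  qed
  show ?thesis using tendsto_sandwich[OF E1 E2 L1 L2] by simp
qed


lemma birkhoff_scale: "birkhoff (\<lambda>x. lam * \<phi> x) k x = lam * birkhoff \<phi> k x"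
  by (simp add: birkhoff_def sum_distrib_left)

lemma birkhoff_add: "birkhoff (\<lambda>x. \<phi>1 x + \<phi>2 x) k x = birkhoff \<phi>1 k x + birkhoff \<phi>2 k x"
  by (simp add: birkhoff_def sum.distrib)

lemma Gs_scale: assumes "lam > 0" shows "Gs P A (\<lambda>x. lam * \<phi> x) t = Gs P A \<phi> (t / lam)"
  using assms by (auto simp: Gs_def birkhoff_scale pos_le_divide_eq mult.commute)

lemma Gs_split:
  assumes p1: "\<forall>y\<in>sigmaP P. 0 < \<phi>1 y" and p2: "\<forall>y\<in>sigmaP P. 0 < \<phi>2 y" and ab: "a + b = t"
  shows "Gs P A (\<lambda>x. \<phi>1 x + \<phi>2 x) t \<subseteq> Gs P A \<phi>1 a \<union> Gs P A \<phi>2 b"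
proof
  fix x assume x: "x \<in> Gs P A (\<lambda>x. \<phi>1 x + \<phi>2 x) t"
  then have xs: "x \<in> sigmaP P" by (simp add: Gs_def)
  show "x \<in> Gs P A \<phi>1 a \<union> Gs P A \<phi>2 b"
  proof (rule ccontr)
    assume "x \<notin> Gs P A \<phi>1 a \<union> Gs P A \<phi>2 b"
    then obtain k1 k2 where k1: "birkhoff \<phi>1 k1 x \<le> a" "(shift ^^ k1) x \<in> A"
      and k2: "birkhoff \<phi>2 k2 x \<le> b" "(shift ^^ k2) x \<in> A"
      using xs by (auto simp: Gs_def)
    define k where "k = min k1 k2"
    have "birkhoff \<phi>1 k x \<le> birkhoff \<phi>1 k1 x" using birkhoff_mono[OF p1 xs] by (simp add: k_def)
    moreover have "birkhoff \<phi>2 k x \<le> birkhoff \<phi>2 k2 x" using birkhoff_mono[OF p2 xs] by (simp add: k_def)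
    ultimately have "birkhoff (\<lambda>x. \<phi>1 x + \<phi>2 x) k x \<le> t" using k1 k2 ab by (simp add: birkhoff_add)
    moreover have "(shift ^^ k) x \<in> A" using k1 k2 by (simp add: k_def min_def)
    ultimately show False using x by (auto simp: Gs_def)
  qed
qed

lemma lin2: assumes "(a::real) > 0" shows "filterlim (\<lambda>t. a * t + d) at_top at_top"
  using lin_filterlim[of "1/a" d] assms by (simp add: mult.commute)


theorem corollary6p8:
  fixes P :: "'a::countable \<Rightarrow> 'a \<Rightarrow> real"
    and \<mu> :: "(nat \<Rightarrow> 'a) measure"
    and p :: "(nat \<Rightarrow> 'a) \<Rightarrow> real"
    and K :: "nat \<Rightarrow> real"
    and A :: "(nat \<Rightarrow> 'a) set"
    and m :: nat
    and W :: "'a list set"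
    and \<phi>1 \<phi>2 :: "(nat \<Rightarrow> 'a) \<Rightarrow> real"
    and lam r1 r2 r12 :: real
  assumes prob: "prob_space \<mu>"
    and sets_mu: "sets \<mu> = sets (Pi\<^sub>M UNIV (\<lambda>_. count_space UNIV))"
    and supp: "emeasure \<mu> (sigmaP P) = 1"
    and shift_meas: "shift \<in> \<mu> \<rightarrow>\<^sub>M \<mu>"
    and inv: "\<And>B. B \<in> sets \<mu> \<Longrightarrow> emeasure \<mu> (shift -` B \<inter> space \<mu>) = emeasure \<mu> B"
    and Kpos: "\<And>n. K n > 0"
    and Kmono: "mono K"
    and Klog: "(\<lambda>n. ln (K n) / real n) \<longlonglongrightarrow> 0"
    and gibbs: "\<And>w. admissible P w \<Longrightarrow> w \<noteq> [] \<Longrightarrow>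
        (\<exists>s. Sw P p w = ereal s \<and>
             inverse (K (length w)) \<le> exp s / measure \<mu> (cyl P w) \<and>
             exp s / measure \<mu> (cyl P w) \<le> K (length w))"
    and m_pos: "m \<ge> 1"
    and W_len: "\<forall>w \<in> W. length w = m"
    and A_def: "A = (\<Union>w \<in> W. cyl P w)"
    and hole: "is_hole \<mu> A"
    and ceil1: "bdd_ceiling P \<mu> \<phi>1"
    and ceil2: "bdd_ceiling P \<mu> \<phi>2"
    and lam_pos: "lam > 0"
    and r1: "has_escape_rate P \<mu> A \<phi>1 r1" and r1_pos: "r1 > 0"
    and r2: "has_escape_rate P \<mu> A \<phi>2 r2" and r2_pos: "r2 > 0"
    and r12: "has_escape_rate P \<mu> A (\<lambda>x. \<phi>1 x + \<phi>2 x) r12" and r12_pos: "r12 > 0"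
  shows "has_escape_rate P \<mu> A (\<lambda>x. lam * \<phi>1 x) (r1 / lam)
     \<and> inverse r12 \<le> inverse r1 + inverse r2"
proof -
  have fin: "finite_measure \<mu>" using prob by (simp add: prob_space_def)
  have sp: "space \<mu> = UNIV" using sets_eq_imp_space_eq[OF sets_mu] by (simp add: space_PiM)
  have Am: "A \<in> sets \<mu>" using hole by (simp add: is_hole_def)
  have Sm: "sigmaP P \<in> sets \<mu>" using supp emeasure_notin_sets by fastforce
  obtain c1 C1 where m1: "\<phi>1 \<in> borel_measurable \<mu>" and c1: "0 < c1" "c1 \<le> C1"
      and b1: "\<forall>y\<in>sigmaP P. c1 \<le> \<phi>1 y \<and> \<phi>1 y \<le> C1"
  proof -
    from ceil1 obtain c C where "\<phi>1 \<in> borel_measurable \<mu>" "0 < c" "\<forall>x\<in>sigmaP P. c \<le> \<phi>1 x \<and> \<phi>1 x \<le> C"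
      unfolding bdd_ceiling_def by blast
    then show ?thesis using that[of c "max C c"] by (auto simp: le_max_iff_disj)
  qed
  obtain c2 C2 where m2: "\<phi>2 \<in> borel_measurable \<mu>" and c2: "0 < c2" "c2 \<le> C2"
      and b2: "\<forall>y\<in>sigmaP P. c2 \<le> \<phi>2 y \<and> \<phi>2 y \<le> C2"
  proof -
    from ceil2 obtain c C where "\<phi>2 \<in> borel_measurable \<mu>" "0 < c" "\<forall>x\<in>sigmaP P. c \<le> \<phi>2 x \<and> \<phi>2 x \<le> C"
      unfolding bdd_ceiling_def by blast
    then show ?thesis using that[of c "max C c"] by (auto simp: le_max_iff_disj)
  qed
  define M where "M \<phi> t = measure (\<mu> \<Otimes>\<^sub>M lborel) (survivors P A \<phi> t)" for \<phi> t
  have Mnn: "\<And>t. M \<phi> t \<ge> 0" for \<phi> by (simp add: M_def)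
  have bnd: "M \<phi> t \<le> measure \<mu> (Gs P A \<phi> t) * C" "measure \<mu> (Gs P A \<phi> (t + c)) * c \<le> M \<phi> t"
    if "\<phi> \<in> borel_measurable \<mu>" "\<forall>y\<in>sigmaP P. c \<le> \<phi> y \<and> \<phi> y \<le> C" "0 < c" "c \<le> C" "0 \<le> t"
    for \<phi> c C t
    unfolding M_def using surv_bounds[OF fin sp shift_meas that(1) Am Sm that(2-5)] by auto
  have lim1: "((\<lambda>t. - ln (M \<phi>1 t) / t) \<longlongrightarrow> r1) at_top"
    using r1 by (simp add: has_escape_rate_def M_def)
  have lim2: "((\<lambda>t. - ln (M \<phi>2 t) / t) \<longlongrightarrow> r2) at_top"
    using r2 by (simp add: has_escape_rate_def M_def)
  have lim12: "((\<lambda>t. - ln (M (\<lambda>x. \<phi>1 x + \<phi>2 x) t) / t) \<longlongrightarrow> r12) at_top"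
    using r12 by (simp add: has_escape_rate_def M_def)
  have Gle: "measure \<mu> (Gs P A \<phi> v) \<le> M \<phi> (v - c) / c"
    if "\<phi> \<in> borel_measurable \<mu>" "\<forall>y\<in>sigmaP P. c \<le> \<phi> y \<and> \<phi> y \<le> C" "0 < c" "c \<le> C" "c \<le> v"
    for \<phi> c C v
  proof -
    have "measure \<mu> (Gs P A \<phi> (v - c + c)) * c \<le> M \<phi> (v - c)"
      using bnd(2)[OF that(1-4), of "v - c"] that(5) by simp
    then show ?thesis using that(3) by (simp add: field_simps)
  qed

  have part1: "has_escape_rate P \<mu> A (\<lambda>x. lam * \<phi>1 x) (r1 / lam)"
  proof -
    have ml: "(\<lambda>x. lam * \<phi>1 x) \<in> borel_measurable \<mu>" using m1 by measurable
    have bl: "\<forall>y\<in>sigmaP P. lam * c1 \<le> lam * \<phi>1 y \<and> lam * \<phi>1 y \<le> lam * C1"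
      using b1 lam_pos by auto
    have lc: "0 < lam * c1" "lam * c1 \<le> lam * C1" using lam_pos c1 by auto
    have up: "eventually (\<lambda>t. M (\<lambda>x. lam * \<phi>1 x) t \<le> (lam * C1 / c1) * M \<phi>1 (t / lam - c1)) at_top"
      using eventually_ge_at_top[of "lam * c1"]
    proof eventually_elim
      case (elim t)
      have t0: "0 \<le> t" using elim lc by linarith
      have u0: "c1 \<le> t / lam" using elim lam_pos by (simp add: field_simps)
      have "M (\<lambda>x. lam * \<phi>1 x) t \<le> measure \<mu> (Gs P A (\<lambda>x. lam * \<phi>1 x) t) * (lam * C1)"
        by (rule bnd(1)[OF ml bl lc t0])
      also have "\<dots> = measure \<mu> (Gs P A \<phi>1 (t / lam)) * (lam * C1)"
        by (simp only: Gs_scale[OF lam_pos])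
      also have "\<dots> \<le> (M \<phi>1 (t / lam - c1) / c1) * (lam * C1)"
        using Gle[OF m1 b1 c1 u0] lam_pos c1 by (intro mult_right_mono) auto
      also have "\<dots> = (lam * C1 / c1) * M \<phi>1 (t / lam - c1)" by simp
      finally show ?case .
    qed
    have lo: "eventually (\<lambda>t. (lam * c1 / C1) * M \<phi>1 (t / lam + c1) \<le> M (\<lambda>x. lam * \<phi>1 x) t) at_top"
      using eventually_ge_at_top[of "0::real"]
    proof eventually_elim
      case (elim t)
      have u0: "0 \<le> t / lam + c1" using elim lam_pos c1 by simp
      have "M \<phi>1 (t / lam + c1) \<le> measure \<mu> (Gs P A \<phi>1 (t / lam + c1)) * C1"
        by (rule bnd(1)[OF m1 b1 c1 u0])
      then have "(lam * c1 / C1) * M \<phi>1 (t / lam + c1) \<le> (lam * c1 / C1) * (measure \<mu> (Gs P A \<phi>1 (t / lam + c1)) * C1)"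
        using lam_pos c1 by (intro mult_left_mono) auto
      also have "\<dots> = measure \<mu> (Gs P A \<phi>1 (t / lam + c1)) * (lam * c1)"
        using c1 by (simp add: field_simps)
      also have "Gs P A \<phi>1 (t / lam + c1) = Gs P A (\<lambda>x. lam * \<phi>1 x) (t + lam * c1)"
      proof -
        have "t / lam + c1 = (t + lam * c1) / lam" using lam_pos by (simp add: field_simps)
        then show ?thesis by (simp only: Gs_scale[OF lam_pos])
      qed
      also have "measure \<mu> (Gs P A (\<lambda>x. lam * \<phi>1 x) (t + lam * c1)) * (lam * c1) \<le> M (\<lambda>x. lam * \<phi>1 x) t"
        by (rule bnd(2)[OF ml bl lc elim])
      finally show ?case .
    qed
    have "((\<lambda>t. - ln (M (\<lambda>x. lam * \<phi>1 x) t) / t) \<longlongrightarrow> r1 / lam) at_top"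
      by (rule rate_sandwich[OF Mnn lim1 r1_pos lam_pos _ _ up lo]) (use lam_pos c1 in auto)
    then show ?thesis by (simp add: has_escape_rate_def M_def)
  qed

  define L where "L = r1 * r2 / (r1 + r2)"
  have Lpos: "L > 0" using r1_pos r2_pos by (simp add: L_def)
  have key: "(1 - \<delta>) * L \<le> r12" if \<delta>: "0 < \<delta>" "\<delta> < 1" for \<delta>
  proof -
    define \<alpha> where "\<alpha> = r2 / (r1 + r2)"
    define \<beta> where "\<beta> = r1 / (r1 + r2)"
    define r1' where "r1' = (1 - \<delta>) * r1"
    define r2' where "r2' = (1 - \<delta>) * r2"
    define \<gamma> where "\<gamma> = (1 - \<delta>) * L"
    have s0: "r1 + r2 > 0" using r1_pos r2_pos by simp
    have ab: "\<alpha> > 0" "\<beta> > 0" "\<alpha> + \<beta> = 1" using r1_pos r2_pos s0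
      by (simp_all add: \<alpha>_def \<beta>_def add_divide_distrib[symmetric])
    have g1: "r1' * \<alpha> = \<gamma>" and g2: "r2' * \<beta> = \<gamma>"
      by (auto simp: r1'_def r2'_def \<gamma>_def L_def \<alpha>_def \<beta>_def)
    have e1: "eventually (\<lambda>u. 0 < M \<phi>1 u \<and> M \<phi>1 u \<le> exp (- r1' * u)) at_top"
      using \<delta> r1_pos by (intro rate_upper[OF Mnn lim1]) (auto simp: r1'_def)
    have e2: "eventually (\<lambda>u. 0 < M \<phi>2 u \<and> M \<phi>2 u \<le> exp (- r2' * u)) at_top"
      using \<delta> r2_pos by (intro rate_upper[OF Mnn lim2]) (auto simp: r2'_def)
    have e1': "eventually (\<lambda>t. 0 < M \<phi>1 (\<alpha> * t + - c1) \<and> M \<phi>1 (\<alpha> * t + - c1) \<le> exp (- r1' * (\<alpha> * t + - c1))) at_top"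
      by (rule eventually_compose_filterlim[OF e1 lin2[OF ab(1)]])
    have e2': "eventually (\<lambda>t. 0 < M \<phi>2 (\<beta> * t + - c2) \<and> M \<phi>2 (\<beta> * t + - c2) \<le> exp (- r2' * (\<beta> * t + - c2))) at_top"
      by (rule eventually_compose_filterlim[OF e2 lin2[OF ab(2)]])
    have e3: "eventually (\<lambda>t. c1 \<le> \<alpha> * t + - c1 + c1 \<and> c2 \<le> \<beta> * t + - c2 + c2 \<and> 0 \<le> t) at_top"
      using eventually_compose_filterlim[OF eventually_ge_at_top[of c1] lin2[OF ab(1), of 0]]
        eventually_compose_filterlim[OF eventually_ge_at_top[of c2] lin2[OF ab(2), of 0]]
        eventually_ge_at_top[of "0::real"]
      by eventually_elim auto
    define D where "D = (C1 + C2) * (exp (r1' * c1) / c1 + exp (r2' * c2) / c2)"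
    have Dpos: "D > 0" unfolding D_def using c1 c2
      by (intro mult_pos_pos add_pos_pos divide_pos_pos) auto
    have ev: "eventually (\<lambda>t. M (\<lambda>x. \<phi>1 x + \<phi>2 x) t \<le> D * exp (- \<gamma> * t)) at_top"
      using e1' e2' e3
    proof eventually_elim
      case (elim t)
      have t0: "0 \<le> t" and a1: "c1 \<le> \<alpha> * t" and a2: "c2 \<le> \<beta> * t" using elim by auto
      have m12: "(\<lambda>x. \<phi>1 x + \<phi>2 x) \<in> borel_measurable \<mu>" using m1 m2 by measurable
      have b12: "\<forall>y\<in>sigmaP P. c1 + c2 \<le> \<phi>1 y + \<phi>2 y \<and> \<phi>1 y + \<phi>2 y \<le> C1 + C2" using b1 b2 by force
      have p1: "\<forall>y\<in>sigmaP P. 0 < \<phi>1 y" using b1 c1 by force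
      have p2: "\<forall>y\<in>sigmaP P. 0 < \<phi>2 y" using b2 c2 by force
      have Gm: "Gs P A \<phi> u \<in> sets \<mu>" if "\<phi> \<in> borel_measurable \<mu>" for \<phi> u
        by (rule Gs_meas[OF sp shift_meas that Am Sm])
      have "M (\<lambda>x. \<phi>1 x + \<phi>2 x) t \<le> measure \<mu> (Gs P A (\<lambda>x. \<phi>1 x + \<phi>2 x) t) * (C1 + C2)"
        by (rule bnd(1)[OF m12 b12]) (use c1 c2 t0 in auto)
      also have "measure \<mu> (Gs P A (\<lambda>x. \<phi>1 x + \<phi>2 x) t) \<le> measure \<mu> (Gs P A \<phi>1 (\<alpha> * t) \<union> Gs P A \<phi>2 (\<beta> * t))"
        using Gs_split[OF p1 p2, of "\<alpha> * t" "\<beta> * t" t] ab(3)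
        by (intro finite_measure.finite_measure_mono[OF fin] sets.Un Gm m1 m2)
          (auto simp: distrib_right[symmetric])
      also have "\<dots> \<le> measure \<mu> (Gs P A \<phi>1 (\<alpha> * t)) + measure \<mu> (Gs P A \<phi>2 (\<beta> * t))"
        by (intro measure_Un_le Gm m1 m2)
      also have "\<dots> \<le> M \<phi>1 (\<alpha> * t - c1) / c1 + M \<phi>2 (\<beta> * t - c2) / c2"
        by (intro add_mono Gle[OF m1 b1 c1 a1] Gle[OF m2 b2 c2 a2])
      also have "\<dots> \<le> exp (- r1' * (\<alpha> * t + - c1)) / c1 + exp (- r2' * (\<beta> * t + - c2)) / c2"
        using elim c1 c2 by (intro add_mono divide_right_mono) auto
      also have "\<dots> = (exp (r1' * c1) / c1 + exp (r2' * c2) / c2) * exp (- \<gamma> * t)"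
      proof -
        have h1: "- r1' * (\<alpha> * t + - c1) = r1' * c1 + - \<gamma> * t"
          using g1[symmetric] by (simp add: algebra_simps)
        have h2: "- r2' * (\<beta> * t + - c2) = r2' * c2 + - \<gamma> * t"
          using g2[symmetric] by (simp add: algebra_simps)
        show ?thesis unfolding h1 h2 exp_add by (simp add: algebra_simps add_divide_distrib)
      qed
      finally have H: "M (\<lambda>x. \<phi>1 x + \<phi>2 x) t \<le> (exp (r1' * c1) / c1 + exp (r2' * c2) / c2) * exp (- \<gamma> * t) * (C1 + C2)"
        using c1 c2 by (simp add: mult_right_mono)
      show ?case using H by (simp add: D_def mult_ac)
    qed
    show ?thesis using rate_lower[OF Mnn lim12 r12_pos Dpos ev] by (simp add: \<gamma>_def)
  qed
  have "L \<le> r12"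
  proof (rule ccontr)
    assume "\<not> L \<le> r12"
    then have lt: "r12 < L" by simp
    define \<delta> where "\<delta> = (L - r12) / (2 * L)"
    have "0 < \<delta>" "\<delta> < 1" using lt Lpos r12_pos by (auto simp: \<delta>_def field_simps)
    from key[OF this] have "(1 - \<delta>) * L \<le> r12" .
    moreover have "(1 - \<delta>) * L = (L + r12) / 2" using Lpos by (simp add: \<delta>_def field_simps)
    ultimately show False using lt by simp
  qed
  then have "inverse r12 \<le> inverse L" using Lpos by (simp add: le_imp_inverse_le)
  also have "inverse L = inverse r1 + inverse r2" using r1_pos r2_pos
    by (simp add: L_def field_simps)
  finally show ?thesis using part1 by simp
qed

end
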